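(* Let $\mathcal U$ be a finite set and $R$ an $n(R)$-place relation on $\mathcal U$. Then $\lambda_1(R)\le\lambda'_0(R)+1$, and if equality holds then $\lambda_1(R)\le 2^{2^{n(R)^2}}$.
   Context: For $a\in\mathcal U$ and $A\subseteq\mathcal U$, $\mathrm{tp}_{\mathrm{bs}}(a,A,R)$ is the set of formulas $\varphi(x,\bar a)$ with $\bar a$ a tuple from $A$ and $\varphi(x,\bar y)$ an atomic or negated atomic formula in the vocabulary $\{R,=\}$ such that $(\mathcal U,R)\models\varphi(a,\bar a)$. $\lambda_1(R)=\max_{A\subseteq\mathcal U}|\{\mathrm{tp}_{\mathrm{bs}}(a,A,R):a\in\mathcal U\setminus A\}|$. For $A\subseteq\mathcal U$ and $n(R)$-tuples $\bar b,\bar c$, $\bar b\approx_A\bar c$ means: $b_i\in A\iff c_i\in A$; $b_i\in A\Rightarrow b_i=c_i$; and $b_i=b_j\iff c_i=c_j$. $\lambda'_0(R)$ is the least $|A|$ over $A\subseteq\mathcal U$ such that $\bar b\approx_A\bar c$ implies ($R(\bar b)\iff R(\bar c)$) for all $n(R)$-tuples $\bar b,\bar c$ from $\mathcal U$. *)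

theory Defs
  imports Main
begin

text \<open>The universe U is the (finite) type 'a; an n-place relation R is a predicate on
  lists, only evaluated on lists of length n.\<close>

text \<open>Terms in the one free variable x, with parameters (elements of U).\<close>
datatype 'a trm = TX | TP 'a

datatype 'a atm = ARel "'a trm list" | AEq "'a trm" "'a trm"

datatype 'a lit = Pos "'a atm" | Neg "'a atm"

fun trm_params :: "'a trm \<Rightarrow> 'a set" where
  "trm_params TX = {}"
| "trm_params (TP c) = {c}"

fun atm_params :: "'a atm \<Rightarrow> 'a set" where
  "atm_params (ARel ts) = \<Union>(trm_params ` set ts)"
| "atm_params (AEq s t) = trm_params s \<union> trm_params t"

fun lit_params :: "'a lit \<Rightarrow> 'a set" where
  "lit_params (Pos p) = atm_params p"
| "lit_params (Neg p) = atm_params p"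

fun atm_wf :: "nat \<Rightarrow> 'a atm \<Rightarrow> bool" where
  "atm_wf n (ARel ts) = (length ts = n)"
| "atm_wf n (AEq s t) = True"

fun lit_wf :: "nat \<Rightarrow> 'a lit \<Rightarrow> bool" where
  "lit_wf n (Pos p) = atm_wf n p"
| "lit_wf n (Neg p) = atm_wf n p"

fun trm_val :: "'a \<Rightarrow> 'a trm \<Rightarrow> 'a" where
  "trm_val a TX = a"
| "trm_val a (TP c) = c"

fun atm_sat :: "('a list \<Rightarrow> bool) \<Rightarrow> 'a \<Rightarrow> 'a atm \<Rightarrow> bool" where
  "atm_sat R a (ARel ts) = R (map (trm_val a) ts)"
| "atm_sat R a (AEq s t) = (trm_val a s = trm_val a t)"

fun lit_sat :: "('a list \<Rightarrow> bool) \<Rightarrow> 'a \<Rightarrow> 'a lit \<Rightarrow> bool" where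
  "lit_sat R a (Pos p) = atm_sat R a p"
| "lit_sat R a (Neg p) = (\<not> atm_sat R a p)"

definition tp_bs :: "nat \<Rightarrow> ('a list \<Rightarrow> bool) \<Rightarrow> 'a \<Rightarrow> 'a set \<Rightarrow> 'a lit set" where
  "tp_bs n R a A = {\<phi>. lit_wf n \<phi> \<and> lit_params \<phi> \<subseteq> A \<and> lit_sat R a \<phi>}"

definition lambda1 :: "nat \<Rightarrow> ('a::finite list \<Rightarrow> bool) \<Rightarrow> nat" where
  "lambda1 n R = Max {card {tp_bs n R a A | a. a \<notin> A} | A. True}"

definition approx_on :: "'a set \<Rightarrow> 'a list \<Rightarrow> 'a list \<Rightarrow> bool" where
  "approx_on A b c \<longleftrightarrow> length b = length c \<and>
     (\<forall>i < length b. (b ! i \<in> A \<longleftrightarrow> c ! i \<in> A) \<and> (b ! i \<in> A \<longrightarrow> b ! i = c ! i)) \<and>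
     (\<forall>i < length b. \<forall>j < length b. (b ! i = b ! j \<longleftrightarrow> c ! i = c ! j))"

definition lambda0' :: "nat \<Rightarrow> ('a::finite list \<Rightarrow> bool) \<Rightarrow> nat" where
  "lambda0' n R = (LEAST k. \<exists>A::'a set. card A = k \<and>
     (\<forall>b c. length b = n \<longrightarrow> length c = n \<longrightarrow> approx_on A b c \<longrightarrow> (R b \<longleftrightarrow> R c)))"

end

theory Submission
  imports Defs
begin

definition patt :: "'a \<Rightarrow> 'a list \<Rightarrow> (nat \<times> nat) set" where
  "patt a b = {(i,j). i < length b \<and> j < length b \<and> (if i = j then b ! i = a else b ! i = b ! j)}"

definition tpat :: "'a trm list \<Rightarrow> (nat \<times> nat) set" where
  "tpat ts = {(i,j). i < length ts \<and> j < length ts \<and> (if i = j then ts ! i = TX else ts ! i = ts ! j)}"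

definition keyf :: "nat \<Rightarrow> ('a list \<Rightarrow> bool) \<Rightarrow> 'a set \<Rightarrow> 'a \<Rightarrow> (nat \<times> nat) set set" where
  "keyf n R A a = {M. \<exists>b. length b = n \<and> set b \<subseteq> insert a A \<and> patt a b = M \<and> R b}"

definition Wit :: "nat \<Rightarrow> ('a list \<Rightarrow> bool) \<Rightarrow> 'a set \<Rightarrow> bool" where
  "Wit n R A0 \<longleftrightarrow> (\<forall>b c. length b = n \<longrightarrow> length c = n \<longrightarrow> approx_on A0 b c \<longrightarrow> (R b \<longleftrightarrow> R c))"

lemma trm_in_A: "\<forall>t\<in>set ts. trm_params t \<subseteq> A \<Longrightarrow> i < length ts \<Longrightarrow> ts ! i \<noteq> TX \<Longrightarrow> trm_val a (ts ! i) \<in> A"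
proof -
  assume a: "\<forall>t\<in>set ts. trm_params t \<subseteq> A" "i < length ts" "ts ! i \<noteq> TX"
  have "ts ! i \<in> set ts" using a(2) by (rule nth_mem)
  then have "trm_params (ts ! i) \<subseteq> A" using a(1) by blast
  then show ?thesis using a(3) by (cases "ts ! i") auto
qed

lemma trm_val_in: "trm_params t \<subseteq> A \<Longrightarrow> trm_val a t \<in> insert a A"
  by (cases t) auto

lemma set_map_in: "\<forall>t\<in>set ts. trm_params t \<subseteq> A \<Longrightarrow> set (map (trm_val a) ts) \<subseteq> insert a A"
  using trm_val_in by fastforce

lemma patt_map:
  assumes "a \<notin> A" "\<forall>t\<in>set ts. trm_params t \<subseteq> A"
  shows "patt a (map (trm_val a) ts) = tpat ts"
proof -
  have "(trm_val a (ts ! i) = trm_val a (ts ! j)) = (ts ! i = ts ! j)" if "i < length ts" "j < length ts" for i j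
    using assms that trm_in_A[OF assms(2) that(1), of a] trm_in_A[OF assms(2) that(2), of a]
    by (cases "ts ! i"; cases "ts ! j") auto
  moreover have "(trm_val a (ts ! i) = a) = (ts ! i = TX)" if "i < length ts" for i
    using assms trm_in_A[OF assms(2) that, of a] by (cases "ts ! i") auto
  ultimately show ?thesis unfolding patt_def tpat_def by auto
qed

lemma approx_ts:
  assumes "a \<notin> A" "a' \<notin> A" "\<forall>t\<in>set ts. trm_params t \<subseteq> A" "a \<notin> A0" "a' \<notin> A0"
  shows "approx_on A0 (map (trm_val a) ts) (map (trm_val a') ts)"
proof -
  have pm: "patt a (map (trm_val a) ts) = patt a' (map (trm_val a') ts)"
    using patt_map[OF assms(1,3)] patt_map[OF assms(2,3)] by simp
  have "(trm_val a (ts ! i) = trm_val a (ts ! j)) = (trm_val a' (ts ! i) = trm_val a' (ts ! j))"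
    if "i < length ts" "j < length ts" "i \<noteq> j" for i j
  proof -
    have "((i,j) \<in> patt a (map (trm_val a) ts)) = ((i,j) \<in> patt a' (map (trm_val a') ts))" using pm by simp
    then show ?thesis using that unfolding patt_def by simp
  qed
  note off = this
  have m: "(trm_val a (ts ! i) \<in> A0 = (trm_val a' (ts ! i) \<in> A0)) \<and>
     (trm_val a (ts ! i) \<in> A0 \<longrightarrow> trm_val a (ts ! i) = trm_val a' (ts ! i))" for i
    using assms(4,5) by (cases "ts ! i") auto
  show ?thesis unfolding approx_on_def
  proof (intro conjI allI impI)
    fix i assume i: "i < length (map (trm_val a) ts)"
    show "(map (trm_val a) ts ! i \<in> A0) = (map (trm_val a') ts ! i \<in> A0)"
      using m[of i] i by simp
    show "map (trm_val a) ts ! i \<in> A0 \<Longrightarrow> map (trm_val a) ts ! i = map (trm_val a') ts ! i"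
      using m[of i] i by simp
  next
    fix i j assume ij: "i < length (map (trm_val a) ts)" "j < length (map (trm_val a) ts)"
    show "(map (trm_val a) ts ! i = map (trm_val a) ts ! j) = (map (trm_val a') ts ! i = map (trm_val a') ts ! j)"
    proof (cases "i = j")
      case False then show ?thesis using off[of i j] ij by simp
    qed simp
  qed simp
qed

lemma approx_patt:
  assumes "set b \<subseteq> insert a A" "set c \<subseteq> insert a A" "length b = length c"
    "patt a b = patt a c" "A \<inter> A0 = {}"
  shows "approx_on A0 b c"
proof -
  have d: "(b ! i = a) = (c ! i = a)" if "i < length b" for i
  proof -
    have "((i,i) \<in> patt a b) = ((i,i) \<in> patt a c)" using assms(4) by simp
    then show ?thesis using assms(3) that unfolding patt_def by simp
  qed
  have o: "(b ! i = b ! j) = (c ! i = c ! j)" if "i < length b" "j < length b" for i j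
  proof (cases "i = j")
    case False
    have "((i,j) \<in> patt a b) = ((i,j) \<in> patt a c)" using assms(4) by simp
    then show ?thesis using False assms(3) that unfolding patt_def by simp
  qed simp
  have bi: "b ! i \<noteq> a \<Longrightarrow> b ! i \<in> A" if "i < length b" for i using assms(1) that nth_mem by blast
  have ci: "c ! i \<noteq> a \<Longrightarrow> c ! i \<in> A" if "i < length b" for i using assms(2,3) that nth_mem by (metis insertE subsetD)
  show ?thesis unfolding approx_on_def using assms(3,5) d o bi ci by fastforce
qed

lemma tp_eq:
  assumes "\<And>ts. length ts = n \<Longrightarrow> \<forall>t\<in>set ts. trm_params t \<subseteq> A \<Longrightarrow>
              R (map (trm_val a) ts) = R (map (trm_val a') ts)"
    "a \<notin> A" "a' \<notin> A"
  shows "tp_bs n R a A = tp_bs n R a' A"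
proof -
  have at: "atm_sat R a p = atm_sat R a' p" if "atm_wf n p" "atm_params p \<subseteq> A" for p
  proof (cases p)
    case (ARel ts)
    then have "\<forall>t\<in>set ts. trm_params t \<subseteq> A" "length ts = n" using that by auto
    then show ?thesis using assms(1)[of ts] ARel by simp
  next
    case (AEq s t) then show ?thesis using that assms(2,3)
      by (cases s; cases t) auto
  qed
  have "lit_sat R a \<phi> = lit_sat R a' \<phi>" if "lit_wf n \<phi>" "lit_params \<phi> \<subseteq> A" for \<phi>
    using that at by (cases \<phi>) auto
  then show ?thesis unfolding tp_bs_def by blast
qed

lemma key_dir:
  assumes "Wit n R A0" "A \<inter> A0 = {}" "a \<notin> A" "a' \<notin> A" "keyf n R A a = keyf n R A a'"
    "length ts = n" "\<forall>t\<in>set ts. trm_params t \<subseteq> A" "R (map (trm_val a) ts)"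
  shows "R (map (trm_val a') ts)"
proof -
  let ?b = "map (trm_val a) ts" and ?c = "map (trm_val a') ts"
  have sb: "set ?b \<subseteq> insert a A" using assms(7) by (rule set_map_in)
  have sc: "set ?c \<subseteq> insert a' A" using assms(7) by (rule set_map_in)
  have "patt a ?b \<in> keyf n R A a" unfolding keyf_def using sb assms(6,8) by (intro CollectI exI[of _ ?b]) simp
  then have "patt a ?b \<in> keyf n R A a'" using assms(5) by simp
  then obtain b where b: "length b = n" "set b \<subseteq> insert a' A" "patt a' b = patt a ?b" "R b"
    unfolding keyf_def by auto
  have "patt a' b = patt a' ?c" using b(3) patt_map[OF assms(3,7)] patt_map[OF assms(4,7)] by simp
  then have "approx_on A0 b ?c" using approx_patt[OF b(2) sc] b(1) assms(2,6) by simp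
  then show ?thesis using assms(1) b(1,4) assms(6) unfolding Wit_def by auto
qed

lemma card_image_le_key:
  assumes "finite S" "\<And>x y. x \<in> S \<Longrightarrow> y \<in> S \<Longrightarrow> g x = g y \<Longrightarrow> f x = f y"
  shows "card (f ` S) \<le> card (g ` S)"
proof -
  have "f ` S = (\<lambda>y. f (inv_into S g y)) ` (g ` S)"
  proof (auto simp: image_iff)
    fix x assume "x \<in> S"
    then show "\<exists>y\<in>S. f x = f (inv_into S g (g y))"
      using assms(2) inv_into_into[of "g x" g S] f_inv_into_f[of "g x" g S] by (metis imageI)
  next
    fix x assume "x \<in> S"
    then show "\<exists>y\<in>S. f (inv_into S g (g x)) = f y"
      using inv_into_into[of "g x" g S] by blast
  qed
  then show ?thesis using card_image_le assms(1) by (metis finite_imageI)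
qed

lemma bound1:
  fixes R :: "'a::finite list \<Rightarrow> bool"
  assumes "Wit n R A0"
  shows "card ((\<lambda>a. tp_bs n R a A) ` (- A)) \<le> card (A0 - A) + 1"
proof -
  have gen: "tp_bs n R a A = tp_bs n R a' A" if "a \<notin> A" "a' \<notin> A" "a \<notin> A0" "a' \<notin> A0" for a a'
  proof (rule tp_eq[OF _ that(1,2)])
    fix ts :: "'a trm list" assume "length ts = n" "\<forall>t\<in>set ts. trm_params t \<subseteq> A"
    then show "R (map (trm_val a) ts) = R (map (trm_val a') ts)"
      using approx_ts[OF that(1,2) _ that(3,4), of ts] assms unfolding Wit_def by simp
  qed
  have "(\<lambda>a. tp_bs n R a A) ` (- A) \<subseteq> (\<lambda>a. tp_bs n R a A) ` (A0 - A) \<union> (\<lambda>a. tp_bs n R a A) ` (- (A \<union> A0))"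
    by auto
  moreover have "card ((\<lambda>a. tp_bs n R a A) ` (- (A \<union> A0))) \<le> 1"
  proof -
    have "\<forall>x\<in>(\<lambda>a. tp_bs n R a A) ` (- (A \<union> A0)). \<forall>y\<in>(\<lambda>a. tp_bs n R a A) ` (- (A \<union> A0)). x = y"
    proof (intro ballI)
      fix x y assume "x \<in> (\<lambda>a. tp_bs n R a A) ` (- (A \<union> A0))" "y \<in> (\<lambda>a. tp_bs n R a A) ` (- (A \<union> A0))"
      then obtain a b where "a \<notin> A" "a \<notin> A0" "b \<notin> A" "b \<notin> A0" "x = tp_bs n R a A" "y = tp_bs n R b A"
        by blast
      then show "x = y" using gen[of a b] by simp
    qed
    moreover have "finite ((\<lambda>a. tp_bs n R a A) ` (- (A \<union> A0)))" by (rule finite_imageI) simp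
    ultimately show ?thesis using card_le_Suc0_iff_eq[of "(\<lambda>a. tp_bs n R a A) ` (- (A \<union> A0))"]
      unfolding One_nat_def by blast
  qed
  moreover have "card ((\<lambda>a. tp_bs n R a A) ` (A0 - A)) \<le> card (A0 - A)"
    by (rule card_image_le) simp
  ultimately show ?thesis
  proof -
    let ?f = "\<lambda>a. tp_bs n R a A"
    assume h: "?f ` (- A) \<subseteq> ?f ` (A0 - A) \<union> ?f ` (- (A \<union> A0))"
      "card (?f ` (- (A \<union> A0))) \<le> 1" "card (?f ` (A0 - A)) \<le> card (A0 - A)"
    have "card (?f ` (- A)) \<le> card (?f ` (A0 - A) \<union> ?f ` (- (A \<union> A0)))"
    proof (rule card_mono[OF _ h(1)])
      show "finite (?f ` (A0 - A) \<union> ?f ` (- (A \<union> A0)))" by (intro finite_UnI finite_imageI) simp_all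
    qed
    also have "\<dots> \<le> card (?f ` (A0 - A)) + card (?f ` (- (A \<union> A0)))" by (rule card_Un_le)
    finally show ?thesis using h(2,3) by linarith
  qed
qed

lemma bound2:
  fixes R :: "'a::finite list \<Rightarrow> bool"
  assumes "Wit n R A0" "A \<inter> A0 = {}"
  shows "card ((\<lambda>a. tp_bs n R a A) ` (- A)) \<le> 2 ^ (2 ^ (n ^ 2))"
proof -
  have "card ((\<lambda>a. tp_bs n R a A) ` (- A)) \<le> card (keyf n R A ` (- A))"
  proof (rule card_image_le_key)
    fix x y assume xy: "x \<in> - A" "y \<in> - A" "keyf n R A x = keyf n R A y"
    show "tp_bs n R x A = tp_bs n R y A"
    proof (rule tp_eq)
      fix ts :: "'a trm list" assume "length ts = n" "\<forall>t\<in>set ts. trm_params t \<subseteq> A"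
      then show "R (map (trm_val x) ts) = R (map (trm_val y) ts)"
        using key_dir[OF assms xy(1,2)[simplified] xy(3)] key_dir[OF assms xy(2,1)[simplified] xy(3)[symmetric]]
        by blast
    qed (use xy in auto)
  qed simp
  also have "\<dots> \<le> card (Pow (Pow ({..<n} \<times> {..<n})))"
  proof (rule card_mono)
    show "keyf n R A ` (- A) \<subseteq> Pow (Pow ({..<n} \<times> {..<n}))"
      unfolding keyf_def patt_def by auto
  qed simp
  also have "\<dots> = 2 ^ (2 ^ (n ^ 2))"
    by (simp add: card_Pow card_cartesian_product power2_eq_square)
  finally show ?thesis .
qed

theorem fact3p2:
  fixes R :: "'a::finite list \<Rightarrow> bool" and n :: nat
  shows "lambda1 n R \<le> lambda0' n R + 1 \<and>
         (lambda1 n R = lambda0' n R + 1 \<longrightarrow> lambda1 n R \<le> 2 ^ (2 ^ (n ^ 2)))"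
proof -
  define T where "T A = card ((\<lambda>a. tp_bs n R a A) ` (- A))" for A :: "'a set"
  have l1: "lambda1 n R = Max (range T)"
  proof -
    have "{tp_bs n R a A |a. a \<notin> A} = (\<lambda>a. tp_bs n R a A) ` (- A)" for A by auto
    then show ?thesis unfolding lambda1_def T_def by (simp add: full_SetCompr_eq)
  qed
  have ex: "\<exists>A::'a set. card A = card (UNIV::'a set) \<and> Wit n R A"
  proof (intro exI conjI)
    show "Wit n R (UNIV::'a set)" unfolding Wit_def approx_on_def
    proof (intro allI impI)
      fix b c :: "'a list" assume h: "length b = n" "length c = n"
        "length b = length c \<and> (\<forall>i<length b. (b ! i \<in> UNIV) = (c ! i \<in> UNIV) \<and> (b ! i \<in> UNIV \<longrightarrow> b ! i = c ! i)) \<and>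
         (\<forall>i<length b. \<forall>j<length b. (b ! i = b ! j) = (c ! i = c ! j))"
      then have "b = c" by (intro nth_equalityI) auto
      then show "R b = R c" by simp
    qed
  qed simp
  have ex2: "\<exists>k. \<exists>A::'a set. card A = k \<and> Wit n R A" using ex by (rule exI)
  have "\<exists>A::'a set. card A = (LEAST k. \<exists>A::'a set. card A = k \<and> Wit n R A) \<and> Wit n R A"
    by (rule LeastI_ex[OF ex2])
  then have "\<exists>A::'a set. card A = lambda0' n R \<and> Wit n R A"
    unfolding lambda0'_def Wit_def by simp
  then obtain A0 :: "'a set" where A0: "card A0 = lambda0' n R" "Wit n R A0" by blast
  have fin: "finite (range T)" by simp
  have "Max (range T) \<in> range T" using fin by (rule Max_in) simp
  then obtain A where A: "lambda1 n R = T A" using l1 by (metis imageE)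
  have b1: "T B \<le> lambda0' n R + 1" for B
  proof -
    have "card (A0 - B) \<le> card A0" by (rule card_mono) auto
    then show ?thesis using bound1[OF A0(2), of B] A0(1) unfolding T_def by linarith
  qed
  have part1: "lambda1 n R \<le> lambda0' n R + 1" using A b1 by simp
  moreover have "lambda1 n R \<le> 2 ^ (2 ^ (n ^ 2))" if eq: "lambda1 n R = lambda0' n R + 1"
  proof -
    have "card (A0 - A) + 1 \<ge> card A0 + 1"
      using bound1[OF A0(2), of A] A eq A0(1) unfolding T_def by simp
    then have "card (A0 - A) = card A0" using card_mono[of A0 "A0 - A"] by simp
    then have "A0 - A = A0" by (intro card_subset_eq) auto
    then have "A \<inter> A0 = {}" by blast
    then show ?thesis using bound2[OF A0(2)] A unfolding T_def by simp
  qed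
  ultimately show ?thesis by blast
qed

end
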